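(* For all $n\ge 1$, $\left|\mathrm{Av}_n[\overline{14}23]\right|=C_{n-1}$, where $C_m=\frac{1}{m+1}\binom{2m}{m}$ is the $m$th Catalan number.
   Context: For $\sigma\in S_n$, the cyclic permutation $[\sigma]$ is the set of all rotations of $\sigma$; $[S_n]$ is the set of cyclic permutations of length $n$. $[\sigma]$ contains the vincular pattern $[\overline{14}23]$ if some rotation of $\sigma$ has entries $a,b,c,d$ appearing in this order with $a,b$ adjacent and $a<c<d<b$; $\mathrm{Av}_n[\overline{14}23]$ is the set of $[\sigma]\in[S_n]$ not containing it. *)

theory Defs
  imports Complex_Main
begin

definition perms :: "nat \<Rightarrow> nat list set" where
  "perms n = {xs. distinct xs \<and> set xs = {1..n}}"

definition cyc :: "nat list \<Rightarrow> nat list set" where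
  "cyc xs = {rotate k xs | k. k < length xs}"

definition cyc_perms :: "nat \<Rightarrow> nat list set set" where
  "cyc_perms n = cyc ` perms n"

text \<open>A linear permutation contains the vincular pattern 14-23 with 1,4 adjacent:
  entries a = t!i, b = t!(i+1), c = t!j, d = t!k with i+1 < j < k and a < c < d < b.\<close>
definition contains_1423_lin :: "nat list \<Rightarrow> bool" where
  "contains_1423_lin t \<longleftrightarrow> (\<exists>i j k. Suc i < j \<and> j < k \<and> k < length t \<and>
      t ! i < t ! j \<and> t ! j < t ! k \<and> t ! k < t ! Suc i)"

definition contains_1423 :: "nat list set \<Rightarrow> bool" where
  "contains_1423 C \<longleftrightarrow> (\<exists>t\<in>C. contains_1423_lin t)"

definition Av_1423 :: "nat \<Rightarrow> nat list set set" where
  "Av_1423 n = {C \<in> cyc_perms n. \<not> contains_1423 C}"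

definition catalan :: "nat \<Rightarrow> real" where
  "catalan m = (1 / (real m + 1)) * real ((2 * m) choose m)"

end

theory Submission
  imports Defs
begin

definition after :: "nat list \<Rightarrow> nat \<Rightarrow> nat list" where
  "after t a = tl (dropWhile (\<lambda>z. z \<noteq> a) t) @ takeWhile (\<lambda>z. z \<noteq> a) t"

lemma tw_split: "a \<notin> set u \<Longrightarrow> takeWhile (\<lambda>z. z \<noteq> a) (u @ a # v) = u"
  by (induct u) auto
lemma dw_split: "a \<notin> set u \<Longrightarrow> dropWhile (\<lambda>z. z \<noteq> a) (u @ a # v) = a # v"
  by (induct u) auto
lemma after_split: "a \<notin> set u \<Longrightarrow> after (u @ a # v) a = v @ u"
  unfolding after_def by (simp add: tw_split dw_split)

lemma split_unique:
  assumes "x \<notin> set u1" "x \<notin> set u2" "u1 @ x # v1 = u2 @ x # v2"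
  shows "u1 = u2 \<and> v1 = v2"
proof -
  have "takeWhile (\<lambda>z. z \<noteq> x) (u1 @ x # v1) = u1" using assms(1) by (induct u1) auto
  moreover have "takeWhile (\<lambda>z. z \<noteq> x) (u2 @ x # v2) = u2" using assms(2) by (induct u2) auto
  ultimately have "u1 = u2" using assms by simp
  then show ?thesis using assms by simp
qed

lemma after_set: "distinct t \<Longrightarrow> a \<in> set t \<Longrightarrow> set (after t a) = set t - {a} \<and> distinct (after t a)"
proof -
  assume d: "distinct t" and a: "a \<in> set t"
  obtain u v where t: "t = u @ a # v" using split_list[OF a] by blast
  then show ?thesis using d after_split[of a u v] by auto
qed

lemma rotate_after:
  assumes "distinct t" "k < length t"
  shows "rotate k t = t ! k # after t (t ! k)"
proof -
  have t: "t = take k t @ t ! k # drop (Suc k) t" using assms id_take_nth_drop by blast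
  have "t ! k \<notin> set (take k t)" using assms
    by (metis distinct_take id_take_nth_drop not_distinct_conv_prefix)
  then have "after t (t ! k) = drop (Suc k) t @ take k t" using after_split[of "t!k" "take k t" "drop (Suc k) t"] t by simp
  moreover have "rotate k t = drop k t @ take k t" using assms by (simp add: rotate_drop_take)
  moreover have "drop k t = t ! k # drop (Suc k) t" using assms by (simp add: Cons_nth_drop_Suc)
  ultimately show ?thesis by simp
qed

lemma after_rot:
  assumes d: "distinct t" and y: "y \<in> set t" and a: "after t y = s1 @ x # s2"
  shows "after t x = s2 @ y # s1"
proof -
  obtain u v where t: "t = u @ y # v" using split_list[OF y] by blast
  have yu: "y \<notin> set u" using d t by auto
  have vu: "v @ u = s1 @ x # s2" using a after_split[OF yu, of v] t by simp
  have dvu: "distinct (v @ u) \<and> y \<notin> set v" using d t by auto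
  have ds: "distinct (s1 @ x # s2)" using dvu unfolding vu by simp
  then have xs1: "x \<notin> set s1" by simp
  have "x \<in> set (v @ u)" unfolding vu by simp
  then have "x \<in> set v \<or> x \<in> set u" by simp
  then show ?thesis
  proof
    assume "x \<in> set v"
    then obtain v1 v2 where v: "v = v1 @ x # v2" using split_list by metis
    have xv1: "x \<notin> set v1" using dvu v by auto
    have e: "v1 = s1 \<and> v2 @ u = s2"
      using split_unique[of x v1 s1 "v2 @ u" s2, OF xv1 xs1] vu v by simp
    have t2: "t = (u @ y # v1) @ x # v2" using t v by simp
    have "x \<notin> set (u @ y # v1)" using d t v by auto
    from after_split[OF this, of v2] t2 e show ?thesis by simp
  next
    assume "x \<in> set u"
    then obtain u1 u2 where u: "u = u1 @ x # u2" using split_list by metis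
    have xv1: "x \<notin> set (v @ u1)" using dvu u by auto
    have e: "v @ u1 = s1 \<and> u2 = s2"
      using split_unique[of x "v @ u1" s1 u2 s2, OF xv1 xs1] vu u by simp
    have t2: "t = u1 @ x # (u2 @ y # v)" using t u by simp
    have "x \<notin> set u1" using d t u by auto
    from after_split[OF this, of "u2 @ y # v"] t2 e show ?thesis by auto
  qed
qed

definition ins :: "nat \<Rightarrow> nat \<Rightarrow> nat list \<Rightarrow> nat list" where
  "ins x N t = concat (map (\<lambda>y. if y = x then [x, N] else [y]) t)"

lemma ins_simps [simp]:
  "ins x N [] = []"
  "ins x N (y # t) = (if y = x then [x, N] else [y]) @ ins x N t"
  "ins x N (t1 @ t2) = ins x N t1 @ ins x N t2"
  by (auto simp: ins_def)

lemma ins_notin [simp]: "x \<notin> set t \<Longrightarrow> ins x N t = t"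
  by (induct t) auto

lemma filter_ins: "\<not> P N \<Longrightarrow> filter P (ins x N t) = filter P t"
  by (induct t) auto

lemma ins_split: "x \<notin> set u \<Longrightarrow> x \<notin> set v \<Longrightarrow> ins x N (u @ x # v) = u @ x # N # v"
  by simp

lemma hd_ins: "t \<noteq> [] \<Longrightarrow> hd (ins x N t) = hd t"
  by (cases t) auto

lemma ins_Nil_iff: "(ins x N t = []) = (t = [])"
  by (cases t) auto

definition cnd :: "nat \<Rightarrow> nat list \<Rightarrow> bool" where
  "cnd a s \<longleftrightarrow> (s \<noteq> [] \<longrightarrow> a < hd s \<longrightarrow> sorted_wrt (>) (filter (\<lambda>z. a < z \<and> z < hd s) s))"

definition Avoid :: "nat list \<Rightarrow> bool" where
  "Avoid t \<longleftrightarrow> (\<forall>a\<in>set t. cnd a (after t a))"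

definition active :: "nat list \<Rightarrow> nat \<Rightarrow> bool" where
  "active t x \<longleftrightarrow> sorted_wrt (>) (filter (\<lambda>z. x < z) (after t x))"

definition act :: "nat list \<Rightarrow> nat set" where
  "act t = {y \<in> set t. active t y}"

locale insctx =
  fixes p :: "nat list" and x N :: nat
  assumes dp: "distinct p" and xp: "x \<in> set p" and Np: "N \<notin> set p"
    and lt: "\<forall>z\<in>set p. z < N"
begin

definition q where "q = ins x N p"

lemma q_split: obtains u v where "p = u @ x # v" "q = u @ x # N # v" "x \<notin> set u" "x \<notin> set v"
proof -
  obtain u v where pu: "p = u @ x # v" using split_list[OF xp] by blast
  then have "x \<notin> set u" "x \<notin> set v" using dp by auto
  then show ?thesis using that pu q_def by simp
qed

lemma dq: "distinct q"
proof (rule q_split)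
  fix u v assume "p = u @ x # v" "q = u @ x # N # v" "x \<notin> set u" "x \<notin> set v"
  then show ?thesis using dp Np by auto
qed

lemma set_q: "set q = insert N (set p)"
proof (rule q_split)
  fix u v assume "p = u @ x # v" "q = u @ x # N # v" "x \<notin> set u" "x \<notin> set v"
  then show ?thesis by auto
qed

lemma after_q_other:
  assumes a: "a \<in> set p" "a \<noteq> x"
  shows "after q a = ins x N (after p a)"
proof -
  obtain u v where pu: "p = u @ a # v" using split_list[OF a(1)] by blast
  have au: "a \<notin> set u" using dp pu by auto
  have "q = ins x N u @ a # ins x N v" using pu a q_def by simp
  moreover have "a \<notin> set (ins x N u)"
  proof -
    have "a \<notin> set (ins x N u) \<or> a = N" using au by (induct u) auto
    then show ?thesis using Np a by auto
  qed
  ultimately have "after q a = ins x N v @ ins x N u" using after_split by simp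
  moreover have "after p a = v @ u" using after_split[OF au] pu by simp
  ultimately show ?thesis by simp
qed

lemma after_q_x: "after q x = N # after p x"
proof (rule q_split)
  fix u v assume "p = u @ x # v" "q = u @ x # N # v" "x \<notin> set u" "x \<notin> set v"
  then show ?thesis using after_split[of x u] by simp
qed

lemma after_q_N: "after q N = after p x @ [x]"
proof (rule q_split)
  fix u v assume h: "p = u @ x # v" "q = u @ x # N # v" "x \<notin> set u" "x \<notin> set v"
  have "N \<notin> set (u @ [x])" using Np h by auto
  moreover have "q = (u @ [x]) @ N # v" using h by simp
  ultimately show ?thesis using after_split[of N "u @ [x]" v] h after_split[of x u v] by simp
qed

lemma after_p_lt: "a \<in> set p \<Longrightarrow> z \<in> set (after p a) \<Longrightarrow> z < N"
  using after_set[OF dp] lt by blast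

lemma Avoid_q: "Avoid q \<longleftrightarrow> Avoid p \<and> active p x"
proof -
  have cN: "cnd N (after q N)"
  proof -
    have "z < N" if "z \<in> set (after q N)" for z
      using that after_q_N after_p_lt[OF xp] lt xp by auto
    then show ?thesis unfolding cnd_def using hd_in_set by fastforce
  qed
  have cx: "cnd x (after q x) \<longleftrightarrow> active p x"
  proof -
    have "x < N" using lt xp by auto
    moreover have "filter (\<lambda>z. x < z \<and> z < N) (after p x) = filter (\<lambda>z. x < z) (after p x)"
      using after_p_lt[OF xp] by (intro filter_cong) auto
    ultimately show ?thesis unfolding cnd_def active_def after_q_x by simp
  qed
  have cpx: "active p x \<Longrightarrow> cnd x (after p x)"
  proof -
    assume h: "active p x"
    have "filter (\<lambda>z. x < z \<and> z < hd (after p x)) (after p x) =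
          filter (\<lambda>z. z < hd (after p x)) (filter (\<lambda>z. x < z) (after p x))"
      by (simp add: filter_filter conj_commute)
    then show ?thesis using h sorted_wrt_filter[of "(>)" "filter (\<lambda>z. x < z) (after p x)"]
      unfolding cnd_def active_def by simp
  qed
  have ca: "cnd a (after q a) \<longleftrightarrow> cnd a (after p a)" if a: "a \<in> set p" "a \<noteq> x" for a
  proof (cases "after p a = []")
    case True then show ?thesis using after_q_other[OF a] by simp
  next
    case False
    have hN: "hd (after p a) < N" using after_p_lt[OF a(1)] False hd_in_set by blast
    have "filter (\<lambda>z. a < z \<and> z < hd (after p a)) (ins x N (after p a)) =
          filter (\<lambda>z. a < z \<and> z < hd (after p a)) (after p a)"
      using hN by (intro filter_ins) simp
    then show ?thesis using False unfolding cnd_def after_q_other[OF a]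
      by (simp add: hd_ins ins_Nil_iff)
  qed
  show ?thesis
    unfolding Avoid_def set_q using cN cx cpx ca xp by auto
qed

lemma act_q:
  assumes ax: "active p x"
  shows "act q = insert N {y \<in> act p. x \<le> y}"
proof -
  have N: "active q N"
  proof -
    have "filter (\<lambda>z. N < z) (after q N) = []"
      using after_q_N after_p_lt[OF xp] lt xp by (fastforce simp: filter_empty_conv)
    then show ?thesis unfolding active_def by simp
  qed
  have X: "active q x"
  proof -
    have "filter (\<lambda>z. x < z) (after q x) = N # filter (\<lambda>z. x < z) (after p x)"
      using after_q_x lt xp by auto
    moreover have "\<forall>z\<in>set (filter (\<lambda>z. x < z) (after p x)). z < N"
      using after_p_lt[OF xp] by auto
    ultimately show ?thesis using ax unfolding active_def by simp
  qed
  have small: "\<not> active q y" if y: "y \<in> set p" "y < x" for y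
  proof -
    have "x \<in> set (after p y)" using after_set[OF dp y(1)] xp y by auto
    then obtain s1 s2 where s: "after p y = s1 @ x # s2" using split_list by metis
    have "distinct (after p y)" using after_set[OF dp y(1)] by simp
    then have "x \<notin> set s1" "x \<notin> set s2" using s by auto
    then have "after q y = s1 @ x # N # s2" using after_q_other[of y] y s by simp
    then have "filter (\<lambda>z. y < z) (after q y) = filter (\<lambda>z. y < z) s1 @ x # N # filter (\<lambda>z. y < z) s2"
      using y lt xp by auto
    moreover have "x < N" using lt xp by auto
    ultimately show ?thesis unfolding active_def by (simp add: sorted_wrt_append)
  qed
  have big1: "active q y" if y: "y \<in> set p" "x < y" "active p y" for y
  proof -
    have "x \<in> set (after p y)" using after_set[OF dp y(1)] xp y by auto
    then obtain s1 s2 where s: "after p y = s1 @ x # s2" using split_list by metis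
    have "distinct (after p y)" using after_set[OF dp y(1)] by simp
    then have xs: "x \<notin> set s1" "x \<notin> set s2" using s by auto
    then have aq: "after q y = s1 @ x # N # s2" using after_q_other[of y] y s by simp
    have ap: "after p x = s2 @ y # s1" using after_rot[OF dp y(1) s] .
    have "sorted_wrt (>) (filter (\<lambda>z. x < z) (s2 @ y # s1))" using ax ap unfolding active_def by simp
    then have "\<forall>z\<in>set s1. x < z \<longrightarrow> z < y" using y by (simp add: sorted_wrt_append)
    then have "filter (\<lambda>z. y < z) s1 = []" using y by (auto simp: filter_empty_conv)
    then have f: "filter (\<lambda>z. y < z) (after q y) = N # filter (\<lambda>z. y < z) s2"
      using aq y lt xp by auto
    have "sorted_wrt (>) (filter (\<lambda>z. y < z) s2)" using y(3) s \<open>x < y\<close>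
      unfolding active_def by (simp add: sorted_wrt_append)
    moreover have "\<forall>z\<in>set s2. z < N" using after_p_lt[OF y(1)] s by auto
    ultimately show ?thesis unfolding active_def f by simp
  qed
  have big2: "active p y" if y: "y \<in> set p" "y \<noteq> x" "active q y" for y
  proof -
    have "filter (\<lambda>z. y < z) (after p y) = filter (\<lambda>z. z \<noteq> N) (filter (\<lambda>z. y < z) (ins x N (after p y)))"
    proof -
      have "filter (\<lambda>z. z \<noteq> N) (filter (\<lambda>z. y < z) (ins x N (after p y))) =
            filter (\<lambda>z. y < z \<and> z \<noteq> N) (ins x N (after p y))" by (simp add: filter_filter conj_commute)
      also have "\<dots> = filter (\<lambda>z. y < z \<and> z \<noteq> N) (after p y)" by (rule filter_ins) simp
      also have "\<dots> = filter (\<lambda>z. y < z) (after p y)"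
        using after_p_lt[OF y(1)] by (intro filter_cong) auto
      finally show ?thesis by simp
    qed
    moreover have "sorted_wrt (>) (filter (\<lambda>z. y < z) (ins x N (after p y)))"
      using y(3) unfolding active_def after_q_other[OF y(1,2)] .
    ultimately show ?thesis unfolding active_def by (simp only: sorted_wrt_filter)
  qed
  show ?thesis
  proof (intro set_eqI iffI)
    fix y assume "y \<in> act q"
    then have y: "y \<in> set q" "active q y" unfolding act_def by auto
    then consider "y = N" | "y \<in> set p" using set_q by auto
    then show "y \<in> insert N {y \<in> act p. x \<le> y}"
    proof cases
      case 1 then show ?thesis by simp
    next
      case 2
      then have "\<not> y < x" using small y by blast
      moreover have "active p y" using big2 2 y ax by (cases "y = x") auto
      ultimately show ?thesis using 2 unfolding act_def by auto
    qed
  next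
    fix y assume "y \<in> insert N {y \<in> act p. x \<le> y}"
    then consider "y = N" | "y \<in> set p" "x \<le> y" "active p y" unfolding act_def by auto
    then show "y \<in> act q"
    proof cases
      case 1 then show ?thesis using N set_q unfolding act_def by simp
    next
      case 2 then show ?thesis using X big1 set_q unfolding act_def
        by (cases "y = x") auto
    qed
  qed
qed

end

definition R :: "nat \<Rightarrow> nat list set" where
  "R n = {t \<in> perms n. hd t = 1 \<and> Avoid t}"

lemma finite_R: "finite (R n)"
proof -
  have "R n \<subseteq> {xs. set xs \<subseteq> {1..n} \<and> length xs = n}"
  proof
    fix t assume "t \<in> R n"
    then have "distinct t" "set t = {1..n}" unfolding R_def perms_def by auto
    then have "length t = n" using distinct_card[of t] by simp
    then show "t \<in> {xs. set xs \<subseteq> {1..n} \<and> length xs = n}" using \<open>set t = {1..n}\<close> by simp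
  qed
  then show ?thesis using finite_lists_length_eq[of "{1..n}" n] finite_subset by blast
qed

lemma finite_act: "finite (act t)"
  unfolding act_def by simp

lemma rank_bij:
  fixes A :: "nat set"
  assumes "finite A"
  shows "bij_betw (\<lambda>x. card {y\<in>A. x \<le> y}) A {1..card A}"
proof -
  let ?r = "\<lambda>x. card {y\<in>A. x \<le> y}"
  have inj: "inj_on ?r A"
  proof (rule inj_onI)
    fix a b assume ab: "a \<in> A" "b \<in> A" "?r a = ?r b"
    show "a = b"
    proof (rule ccontr)
      assume "a \<noteq> b"
      then have "a < b \<or> b < a" by auto
      then show False
      proof
        assume "a < b"
        then have "{y\<in>A. b \<le> y} \<subseteq> {y\<in>A. a \<le> y}" by auto
        moreover have "a \<notin> {y\<in>A. b \<le> y}" using \<open>a < b\<close> by auto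
        moreover have "a \<in> {y\<in>A. a \<le> y}" using ab by auto
        ultimately have "{y\<in>A. b \<le> y} \<subset> {y\<in>A. a \<le> y}" by blast
        then have "?r b < ?r a" using assms by (intro psubset_card_mono) auto
        then show False using ab by simp
      next
        assume "b < a"
        then have "{y\<in>A. a \<le> y} \<subseteq> {y\<in>A. b \<le> y}" by auto
        moreover have "b \<notin> {y\<in>A. a \<le> y}" using \<open>b < a\<close> by auto
        moreover have "b \<in> {y\<in>A. b \<le> y}" using ab by auto
        ultimately have "{y\<in>A. a \<le> y} \<subset> {y\<in>A. b \<le> y}" by blast
        then have "?r a < ?r b" using assms by (intro psubset_card_mono) auto
        then show False using ab by simp
      qed
    qed
  qed
  have sub: "?r ` A \<subseteq> {1..card A}"
  proof
    fix c assume "c \<in> ?r ` A"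
    then obtain a where a: "a \<in> A" "c = ?r a" by auto
    have "a \<in> {y\<in>A. a \<le> y}" using a by auto
    moreover have "finite {y\<in>A. a \<le> y}" using assms by simp
    ultimately have "card {y\<in>A. a \<le> y} > 0" using card_gt_0_iff by blast
    then have "1 \<le> c" using a by simp
    moreover have "c \<le> card A" unfolding a(2) using assms by (intro card_mono) auto
    ultimately show "c \<in> {1..card A}" by simp
  qed
  have "card (?r ` A) = card A" using card_image[OF inj] .
  then have "?r ` A = {1..card A}" using sub by (intro card_subset_eq) auto
  then show ?thesis using inj unfolding bij_betw_def by simp
qed

lemma R_bij:
  assumes n: "1 \<le> n"
  shows "bij_betw (\<lambda>(p, x). ins x (Suc n) p) (SIGMA p:R n. act p) (R (Suc n))"
  unfolding bij_betw_def
proof (intro conjI)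
  show "inj_on (\<lambda>(p, x). ins x (Suc n) p) (SIGMA p:R n. act p)"
  proof (rule inj_onI, clarify)
    fix p x p' x'
    assume h: "p \<in> R n" "x \<in> act p" "p' \<in> R n" "x' \<in> act p'" "ins x (Suc n) p = ins x' (Suc n) p'"
    have pp: "distinct p \<and> set p = {1..n}" "distinct p' \<and> set p' = {1..n}"
      using h unfolding R_def perms_def by auto
    have xs: "x \<in> set p" "x' \<in> set p'" using h unfolding act_def by auto
    interpret I1: insctx p x "Suc n" using pp xs by unfold_locales auto
    interpret I2: insctx p' x' "Suc n" using pp xs by unfold_locales auto
    have "filter (\<lambda>z. z \<noteq> Suc n) (ins x (Suc n) p) = p"
      using filter_ins[of "\<lambda>z. z \<noteq> Suc n"] pp by simp
    moreover have "filter (\<lambda>z. z \<noteq> Suc n) (ins x' (Suc n) p') = p'"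
      using filter_ins[of "\<lambda>z. z \<noteq> Suc n"] pp by simp
    ultimately have pe: "p = p'" using h by simp
    obtain u v where uv: "p = u @ x # v" "I1.q = u @ x # Suc n # v" by (rule I1.q_split)
    obtain u' v' where uv': "p' = u' @ x' # v'" "I2.q = u' @ x' # Suc n # v'" by (rule I2.q_split)
    have "(u @ [x]) @ Suc n # v = (u' @ [x']) @ Suc n # v'"
      using uv uv' h(5) I1.q_def I2.q_def by simp
    moreover have "Suc n \<notin> set (u @ [x])" "Suc n \<notin> set (u' @ [x'])"
    proof -
      have "Suc n \<notin> set p" "Suc n \<notin> set p'" using pp by auto
      then show "Suc n \<notin> set (u @ [x])" "Suc n \<notin> set (u' @ [x'])" using uv uv' by auto
    qed
    ultimately have "u @ [x] = u' @ [x']" using split_unique[of "Suc n" "u @ [x]" "u' @ [x']" v v'] by blast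
    then show "p = p' \<and> x = x'" using pe by simp
  qed
  show "(\<lambda>(p, x). ins x (Suc n) p) ` (SIGMA p:R n. act p) = R (Suc n)"
  proof (intro set_eqI iffI)
    fix q assume "q \<in> (\<lambda>(p, x). ins x (Suc n) p) ` (SIGMA p:R n. act p)"
    then obtain p x where h: "p \<in> R n" "x \<in> act p" "q = ins x (Suc n) p" by auto
    have pp: "distinct p" "set p = {1..n}" "hd p = 1" "Avoid p"
      using h unfolding R_def perms_def by auto
    have xs: "x \<in> set p" "active p x" using h unfolding act_def by auto
    interpret I: insctx p x "Suc n" using pp xs by unfold_locales auto
    have "p \<noteq> []" using pp n by auto
    then have "hd q = 1" using hd_ins pp h by simp
    moreover have "set q = {1..Suc n}" using I.set_q pp h I.q_def by auto
    moreover have "distinct q" using I.dq h I.q_def by simp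
    moreover have "Avoid q" using I.Avoid_q pp xs h I.q_def by simp
    ultimately show "q \<in> R (Suc n)" unfolding R_def perms_def by simp
  next
    fix q assume "q \<in> R (Suc n)"
    then have qq: "distinct q" "set q = {1..Suc n}" "hd q = 1" "Avoid q"
      unfolding R_def perms_def by auto
    have "Suc n \<in> set q" using qq by simp
    then obtain w v where wv: "q = w @ Suc n # v" using split_list by metis
    have "w \<noteq> []" using wv qq n by auto
    then obtain u x where ux: "w = u @ [x]" by (metis rev_exhaust)
    define p where "p = u @ x # v"
    have dp: "distinct p" using qq wv ux p_def by auto
    have sp: "set p = {1..n}"
    proof -
      have "set q = insert (Suc n) (set p)" using wv ux p_def by auto
      moreover have "Suc n \<notin> set p" using qq wv ux p_def by auto
      ultimately have "set p = set q - {Suc n}" by auto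
      moreover have "{1..Suc n} = insert (Suc n) {1..n}" by auto
      ultimately show ?thesis using qq by auto
    qed
    interpret I: insctx p x "Suc n" using dp sp p_def by unfold_locales auto
    have xuv: "x \<notin> set u" "x \<notin> set v" using dp p_def by auto
    have qi: "q = ins x (Suc n) p" using wv ux p_def xuv by simp
    then have "Avoid p \<and> active p x" using I.Avoid_q qq I.q_def by simp
    moreover have "hd p = 1" using qq wv ux p_def by (cases u) auto
    ultimately have "p \<in> R n" "x \<in> act p" using dp sp p_def unfolding R_def perms_def act_def by auto
    then show "q \<in> (\<lambda>(p, x). ins x (Suc n) p) ` (SIGMA p:R n. act p)" using qi by auto
  qed
qed

lemma act_card:
  assumes n: "1 \<le> n" and p: "p \<in> R n" and x: "x \<in> act p"
  shows "card (act (ins x (Suc n) p)) = Suc (card {y \<in> act p. x \<le> y})"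
proof -
  have pp: "distinct p" "set p = {1..n}"
      using p unfolding R_def perms_def by auto
  have xs: "x \<in> set p" "active p x" using x unfolding act_def by auto
  interpret I: insctx p x "Suc n" using pp xs by unfold_locales auto
  have "act I.q = insert (Suc n) {y \<in> act p. x \<le> y}" using I.act_q xs by simp
  moreover have "Suc n \<notin> {y \<in> act p. x \<le> y}" using pp unfolding act_def by auto
  ultimately show ?thesis using finite_act I.q_def by simp
qed

fun g :: "nat \<Rightarrow> nat \<Rightarrow> real" where
  "g 0 k = 1"
| "g (Suc m) k = (\<Sum>c=1..k. g m (Suc c))"

lemma sum_step:
  assumes n: "1 \<le> n"
  shows "(\<Sum>q\<in>R (Suc n). f q) = (\<Sum>p\<in>R n. \<Sum>x\<in>act p. f (ins x (Suc n) p))"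
proof -
  have "(\<Sum>q\<in>R (Suc n). f q) = (\<Sum>z\<in>(SIGMA p:R n. act p). f ((\<lambda>(p, x). ins x (Suc n) p) z))"
    using sum.reindex_bij_betw[OF R_bij[OF n], of f] by simp
  also have "\<dots> = (\<Sum>p\<in>R n. \<Sum>x\<in>act p. f (ins x (Suc n) p))"
    using sum.Sigma[OF finite_R[of n], where B=act and g="\<lambda>p x. f (ins x (Suc n) p)"] finite_act
    by (simp add: case_prod_beta' split_beta)
  finally show ?thesis .
qed

lemma main_count:
  assumes "1 \<le> n"
  shows "real (card (R (n + m))) = (\<Sum>p\<in>R n. g m (card (act p)))"
  using assms
proof (induction m arbitrary: n)
  case 0
  then show ?case by simp
next
  case (Suc m)
  have "real (card (R (n + Suc m))) = real (card (R (Suc n + m)))" by simp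
  also have "\<dots> = (\<Sum>q\<in>R (Suc n). g m (card (act q)))" using Suc.IH[of "Suc n"] Suc.prems by simp
  also have "\<dots> = (\<Sum>p\<in>R n. \<Sum>x\<in>act p. g m (card (act (ins x (Suc n) p))))"
    using sum_step[OF Suc.prems] .
  also have "\<dots> = (\<Sum>p\<in>R n. \<Sum>x\<in>act p. g m (Suc (card {y \<in> act p. x \<le> y})))"
    using act_card[OF Suc.prems] by (intro sum.cong) auto
  also have "\<dots> = (\<Sum>p\<in>R n. g (Suc m) (card (act p)))"
  proof (intro sum.cong refl)
    fix p
    have "(\<Sum>x\<in>act p. g m (Suc (card {y \<in> act p. x \<le> y}))) = (\<Sum>c\<in>{1..card (act p)}. g m (Suc c))"
      using sum.reindex_bij_betw[OF rank_bij[OF finite_act[of p]], of "\<lambda>c. g m (Suc c)"] .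
    then show "(\<Sum>x\<in>act p. g m (Suc (card {y \<in> act p. x \<le> y}))) = g (Suc m) (card (act p))"
      by simp
  qed
  finally show ?case .
qed

lemma after1: "after [a] a = []"
  using after_split[of a "[]" "[]"] by simp

lemma R1: "R 1 = {[1]}"
proof -
  have "perms 1 = {[1]}"
  proof (intro set_eqI iffI)
    fix xs assume "xs \<in> perms 1"
    then have "distinct xs" "set xs = {1}" unfolding perms_def by simp_all
    then have "length xs = 1" using distinct_card[of xs] by simp
    then obtain a where "xs = [a]" by (cases xs) auto
    then show "xs \<in> {[1]}" using \<open>set xs = {1}\<close> by simp
  next
    fix xs assume "xs \<in> {[1::nat]}"
    then show "xs \<in> perms 1" unfolding perms_def by simp
  qed
  moreover have A: "Avoid [1]" unfolding Avoid_def cnd_def using after1[of 1] by simp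
  ultimately have P: "perms 1 = {[1]}" "Avoid [1]" by blast+
  show ?thesis
  proof (intro set_eqI iffI)
    fix t assume "t \<in> R 1"
    then have "t \<in> perms 1" unfolding R_def by blast
    then show "t \<in> {[1]}" using P by blast
  next
    fix t assume "t \<in> {[1::nat]}"
    then have t: "t = [1]" by blast
    have "[1] \<in> R 1" unfolding R_def using P by simp
    then show "t \<in> R 1" using t by blast
  qed
qed

lemma card_R: "real (card (R (Suc m))) = g m 1"
proof -
  have "active [1] 1" unfolding active_def using after1[of 1] by simp
  then have "act [1] = {1}" unfolding act_def by (intro set_eqI iffI) auto
  then show ?thesis using main_count[of 1 m] R1 by simp
qed

definition G :: "nat \<Rightarrow> nat \<Rightarrow> real" where
  "G m k = real k * fact (2*m+k-1) / (fact m * fact (m+k))"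

lemma G_step: "G (Suc m) (Suc k) = G (Suc m) k + G m (Suc (Suc k))"
proof -
  define A :: real where "A = fact (2*m+k+1)"
  define B :: real where "B = fact (m+k+1)"
  define C :: real where "C = fact m"
  have pos: "A > 0" "B > 0" "C > 0" unfolding A_def B_def C_def by auto
  have e1: "G (Suc m) (Suc k) = (k+1) * ((2*m+k+2) * A) / (((m+1) * C) * ((m+k+2) * B))"
    unfolding G_def A_def B_def C_def by (simp add: algebra_simps)
  have e2: "G (Suc m) k = k * A / (((m+1) * C) * B)"
    unfolding G_def A_def B_def C_def by (simp add: algebra_simps)
  have e3: "G m (Suc (Suc k)) = (k+2) * A / (C * ((m+k+2) * B))"
    unfolding G_def A_def B_def C_def by (simp add: algebra_simps)
  define D0 where "D0 = ((m+1) * C) * ((m+k+2) * B)"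
  have D0: "D0 > 0" unfolding D0_def using pos by simp
  have f1: "G (Suc m) (Suc k) = ((k+1) * (2*m+k+2)) * A / D0"
    unfolding e1 D0_def by (simp add: algebra_simps)
  have f2: "G (Suc m) k = (k * (m+k+2)) * A / D0"
  proof -
    have ne1: "((m+1) * C) * B \<noteq> 0" using pos by simp
    have ne2: "D0 \<noteq> 0" using D0 by simp
    show ?thesis unfolding e2 by (simp only: frac_eq_eq[OF ne1 ne2]) (simp add: D0_def algebra_simps)
  qed
  have f3: "G m (Suc (Suc k)) = ((k+2) * (m+1)) * A / D0"
  proof -
    have ne1: "C * ((m+k+2) * B) \<noteq> 0" using pos by simp
    have ne2: "D0 \<noteq> 0" using D0 by simp
    show ?thesis unfolding e3 by (simp only: frac_eq_eq[OF ne1 ne2]) (simp add: D0_def algebra_simps)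
  qed
  have num: "real ((k+1) * (2*m+k+2)) = real (k * (m+k+2)) + real ((k+2) * (m+1))"
  proof -
    have "(k+1) * (2*m+k+2) = k * (m+k+2) + (k+2) * (m+1)" by (simp add: algebra_simps)
    then show ?thesis by (metis of_nat_add)
  qed
  show ?thesis unfolding f1 f2 f3 using num by (simp add: add_divide_distrib[symmetric] distrib_right)
qed

lemma G_sum: "(\<Sum>c=1..k. G m (Suc c)) = G (Suc m) k"
proof (induction k)
  case 0 then show ?case by (simp add: G_def)
next
  case (Suc k)
  have "(\<Sum>c=1..Suc k. G m (Suc c)) = (\<Sum>c=1..k. G m (Suc c)) + G m (Suc (Suc k))"
    by simp
  then show ?case using Suc G_step by simp
qed

lemma g_G: "1 \<le> k \<Longrightarrow> g m k = G m k"
proof (induction m arbitrary: k)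
  case 0
  then obtain j where k: "k = Suc j" by (cases k) auto
  have "fact (Suc j) = (real (Suc j)) * (fact j :: real)" by (rule fact_Suc)
  moreover have "(fact j :: real) > 0" by simp
  ultimately show ?case unfolding G_def k by simp
next
  case (Suc m)
  have "g (Suc m) k = (\<Sum>c=1..k. g m (Suc c))" by simp
  also have "\<dots> = (\<Sum>c=1..k. G m (Suc c))" using Suc.IH by (intro sum.cong) auto
  finally show ?case using G_sum by simp
qed

lemma g_catalan: "g m 1 = catalan m"
proof -
  have "g m 1 = fact (2*m) / (fact m * fact (Suc m))" using g_G[of 1 m] by (simp add: G_def)
  also have "\<dots> = catalan m"
  proof -
    have b: "real ((2*m) choose m) = fact (2*m) / (fact m * fact m)"
      using binomial_fact[of m "2*m", where 'a=real] by simp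
    have f: "fact (Suc m) = real (Suc m) * (fact m :: real)" by (rule fact_Suc)
    have p: "(fact m :: real) > 0" by simp
    show ?thesis unfolding catalan_def b f using p by (simp add: field_simps)
  qed
  finally show ?thesis .
qed

definition pat0 :: "nat list \<Rightarrow> bool" where
  "pat0 r \<longleftrightarrow> (\<exists>j k. 1 < j \<and> j < k \<and> k < length r \<and> r ! 0 < r ! j \<and> r ! j < r ! k \<and> r ! k < r ! 1)"

lemma nth_cond_cons:
  "(\<forall>j k. j < k \<longrightarrow> k < length (x # xs) \<longrightarrow> P ((x#xs) ! j) \<longrightarrow> P ((x#xs) ! k) \<longrightarrow> Q ((x#xs) ! j) ((x#xs) ! k))
   \<longleftrightarrow> (\<forall>k<length xs. P x \<longrightarrow> P (xs ! k) \<longrightarrow> Q x (xs ! k)) \<and>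
       (\<forall>j k. j < k \<longrightarrow> k < length xs \<longrightarrow> P (xs ! j) \<longrightarrow> P (xs ! k) \<longrightarrow> Q (xs ! j) (xs ! k))"
  (is "?L \<longleftrightarrow> ?A \<and> ?B")
proof
  assume L: ?L
  have "?A"
  proof (intro allI impI)
    fix k assume "k < length xs" "P x" "P (xs ! k)"
    then show "Q x (xs ! k)" using L[rule_format, of 0 "Suc k"] by simp
  qed
  moreover have "?B"
  proof (intro allI impI)
    fix j k assume "j < k" "k < length xs" "P (xs ! j)" "P (xs ! k)"
    then show "Q (xs ! j) (xs ! k)" using L[rule_format, of "Suc j" "Suc k"] by simp
  qed
  ultimately show "?A \<and> ?B" ..
next
  assume AB: "?A \<and> ?B"
  show ?L
  proof (intro allI impI)
    fix j k assume h: "j < k" "k < length (x # xs)" "P ((x#xs) ! j)" "P ((x#xs) ! k)"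
    then obtain k' where k: "k = Suc k'" by (cases k) auto
    show "Q ((x#xs) ! j) ((x#xs) ! k)"
    proof (cases j)
      case 0 then show ?thesis using AB h k by auto
    next
      case (Suc j') then show ?thesis using AB h k by auto
    qed
  qed
qed

lemma sw_filter_nth:
  "sorted_wrt Q (filter P xs) \<longleftrightarrow>
   (\<forall>j k. j < k \<longrightarrow> k < length xs \<longrightarrow> P (xs ! j) \<longrightarrow> P (xs ! k) \<longrightarrow> Q (xs ! j) (xs ! k))"
proof (induction xs)
  case Nil then show ?case by simp
next
  case (Cons x xs)
  have "(\<forall>k<length xs. P x \<longrightarrow> P (xs ! k) \<longrightarrow> Q x (xs ! k)) \<longleftrightarrow>
        (P x \<longrightarrow> (\<forall>y\<in>set (filter P xs). Q x y))"
    by (auto simp: in_set_conv_nth)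
  then show ?case unfolding nth_cond_cons Cons.IH[symmetric] by auto
qed

lemma pat0_cnd:
  assumes d: "distinct (a # s)"
  shows "pat0 (a # s) \<longleftrightarrow> \<not> cnd a s"
proof (cases s)
  case Nil then show ?thesis unfolding pat0_def cnd_def by auto
next
  case (Cons b rest)
  have dr: "distinct rest" using d Cons by simp
  let ?P = "\<lambda>z. a < z \<and> z < b"
  have "pat0 (a # s) \<longleftrightarrow> (\<exists>j k. j < k \<and> k < length rest \<and> a < rest ! j \<and> rest ! j < rest ! k \<and> rest ! k < b)"
  proof
    assume "pat0 (a # s)"
    then obtain j k where h: "1 < j" "j < k" "k < length (a # s)" "(a#s) ! 0 < (a#s) ! j"
      "(a#s) ! j < (a#s) ! k" "(a#s) ! k < (a#s) ! 1" unfolding pat0_def by blast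
    define j' where "j' = j - 2"
    define k' where "k' = k - 2"
    have j: "j = Suc (Suc j')" using h(1) unfolding j'_def by simp
    have k: "k = Suc (Suc k')" using h(1,2) unfolding k'_def by simp
    show "\<exists>j k. j < k \<and> k < length rest \<and> a < rest ! j \<and> rest ! j < rest ! k \<and> rest ! k < b"
      using h j k Cons by (intro exI[of _ j'] exI[of _ k']) auto
  next
    assume "\<exists>j k. j < k \<and> k < length rest \<and> a < rest ! j \<and> rest ! j < rest ! k \<and> rest ! k < b"
    then obtain j k where h: "j < k" "k < length rest" "a < rest ! j" "rest ! j < rest ! k" "rest ! k < b"
      by blast
    show "pat0 (a # s)" unfolding pat0_def
      using h Cons by (intro exI[of _ "Suc (Suc j)"] exI[of _ "Suc (Suc k)"]) auto
  qed
  also have "\<dots> \<longleftrightarrow> \<not> (a < b \<longrightarrow> sorted_wrt (>) (filter ?P rest))"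
  proof -
    have "sorted_wrt (>) (filter ?P rest) \<longleftrightarrow>
      (\<forall>j k. j < k \<longrightarrow> k < length rest \<longrightarrow> ?P (rest ! j) \<longrightarrow> ?P (rest ! k) \<longrightarrow> rest ! j > rest ! k)"
      by (rule sw_filter_nth)
    moreover have ne: "rest ! j \<noteq> rest ! k" if "j < k" "k < length rest" for j k
      using dr that nth_eq_iff_index_eq by fastforce
    moreover have "(\<exists>j k. j < k \<and> k < length rest \<and> a < rest ! j \<and> rest ! j < rest ! k \<and> rest ! k < b)
      \<longleftrightarrow> \<not> (a < b \<longrightarrow> (\<forall>j k. j < k \<longrightarrow> k < length rest \<longrightarrow> ?P (rest ! j) \<longrightarrow> ?P (rest ! k) \<longrightarrow> rest ! j > rest ! k))"
    proof
      assume "\<exists>j k. j < k \<and> k < length rest \<and> a < rest ! j \<and> rest ! j < rest ! k \<and> rest ! k < b"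
      then obtain j k where h: "j < k" "k < length rest" "a < rest ! j" "rest ! j < rest ! k" "rest ! k < b"
        by blast
      then have "a < b" by linarith
      then show "\<not> (a < b \<longrightarrow> (\<forall>j k. j < k \<longrightarrow> k < length rest \<longrightarrow> ?P (rest ! j) \<longrightarrow> ?P (rest ! k) \<longrightarrow> rest ! j > rest ! k))"
        using h by force
    next
      assume "\<not> (a < b \<longrightarrow> (\<forall>j k. j < k \<longrightarrow> k < length rest \<longrightarrow> ?P (rest ! j) \<longrightarrow> ?P (rest ! k) \<longrightarrow> rest ! j > rest ! k))"
      then obtain j k where h: "j < k" "k < length rest" "?P (rest ! j)" "?P (rest ! k)" "\<not> rest ! j > rest ! k"
        by blast
      then have "rest ! j < rest ! k" using ne[OF h(1,2)] by linarith
      then show "\<exists>j k. j < k \<and> k < length rest \<and> a < rest ! j \<and> rest ! j < rest ! k \<and> rest ! k < b"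
        using h by blast
    qed
    ultimately show ?thesis by simp
  qed
  also have "\<dots> \<longleftrightarrow> \<not> cnd a s" unfolding cnd_def Cons by simp
  finally show ?thesis .
qed

lemma contains_rot:
  assumes "t \<noteq> []"
  shows "contains_1423 (cyc t) \<longleftrightarrow> (\<exists>k<length t. pat0 (rotate k t))"
proof
  assume "contains_1423 (cyc t)"
  then obtain k0 where k0: "k0 < length t" "contains_1423_lin (rotate k0 t)"
    unfolding contains_1423_def cyc_def by blast
  let ?r = "rotate k0 t"
  obtain i j k where h: "Suc i < j" "j < k" "k < length ?r" "?r ! i < ?r ! j" "?r ! j < ?r ! k"
    "?r ! k < ?r ! Suc i" using k0(2) unfolding contains_1423_lin_def by blast
  let ?s = "rotate i ?r"
  have L: "length ?r = length t" by simp
  have n0: "?s ! 0 = ?r ! i" using h nth_rotate[of 0 ?r i] assms by simp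
  have n1: "?s ! 1 = ?r ! Suc i" using h nth_rotate[of 1 ?r i] assms by simp
  have nj: "?s ! (j - i) = ?r ! j" using h nth_rotate[of "j - i" ?r i] assms by simp
  have nk: "?s ! (k - i) = ?r ! k" using h nth_rotate[of "k - i" ?r i] assms by simp
  have "pat0 ?s" unfolding pat0_def
    using h n0 n1 nj nk by (intro exI[of _ "j - i"] exI[of _ "k - i"]) auto
  moreover have "?s = rotate ((i + k0) mod length t) t"
    by (simp add: rotate_rotate rotate_conv_mod[of "i + k0" t, symmetric])
  moreover have "(i + k0) mod length t < length t" using assms by simp
  ultimately show "\<exists>k<length t. pat0 (rotate k t)" by metis
next
  assume "\<exists>k<length t. pat0 (rotate k t)"
  then obtain k where k: "k < length t" "pat0 (rotate k t)" by blast
  then obtain j k' where jk: "1 < j" "j < k'" "k' < length (rotate k t)" "rotate k t ! 0 < rotate k t ! j"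
    "rotate k t ! j < rotate k t ! k'" "rotate k t ! k' < rotate k t ! 1" unfolding pat0_def by blast
  then have "contains_1423_lin (rotate k t)"
    unfolding contains_1423_lin_def by (intro exI[of _ 0] exI[of _ j] exI[of _ k']) simp
  moreover have "rotate k t \<in> cyc t" using k unfolding cyc_def by blast
  ultimately show "contains_1423 (cyc t)" unfolding contains_1423_def by blast
qed

lemma contains_iff:
  assumes d: "distinct t" and ne: "t \<noteq> []"
  shows "contains_1423 (cyc t) \<longleftrightarrow> \<not> Avoid t"
proof -
  have "contains_1423 (cyc t) \<longleftrightarrow> (\<exists>k<length t. pat0 (rotate k t))" using contains_rot[OF ne] .
  also have "\<dots> \<longleftrightarrow> (\<exists>k<length t. \<not> cnd (t ! k) (after t (t ! k)))"
  proof -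
    have "pat0 (rotate k t) \<longleftrightarrow> \<not> cnd (t ! k) (after t (t ! k))" if "k < length t" for k
    proof -
      have "distinct (t ! k # after t (t ! k))"
        using rotate_after[OF d that] d by (metis distinct_rotate)
      then show ?thesis using rotate_after[OF d that] pat0_cnd by simp
    qed
    then show ?thesis by blast
  qed
  also have "\<dots> \<longleftrightarrow> (\<exists>a\<in>set t. \<not> cnd a (after t a))" by (metis in_set_conv_nth)
  finally show ?thesis unfolding Avoid_def by blast
qed

lemma cyc_range: "t \<noteq> [] \<Longrightarrow> cyc t = range (\<lambda>j. rotate j t)"
  unfolding cyc_def
proof (intro set_eqI iffI)
  fix r assume "t \<noteq> []" "r \<in> range (\<lambda>j. rotate j t)"
  then obtain j where "r = rotate j t" by blast
  then have "r = rotate (j mod length t) t" by (simp add: rotate_conv_mod[symmetric])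
  then show "r \<in> {rotate k t |k. k < length t}" using \<open>t \<noteq> []\<close> by auto
qed auto

lemma cyc_rotate: assumes "t \<noteq> []" shows "cyc (rotate k t) = cyc t"
proof -
  have ne: "rotate k t \<noteq> []" using assms by simp
  have "range (\<lambda>j. rotate j (rotate k t)) = range (\<lambda>j. rotate j t)"
  proof (intro set_eqI iffI)
    fix r assume "r \<in> range (\<lambda>j. rotate j (rotate k t))"
    then show "r \<in> range (\<lambda>j. rotate j t)" by (auto simp: rotate_rotate)
  next
    fix r assume "r \<in> range (\<lambda>j. rotate j t)"
    then obtain j where r: "r = rotate j t" by blast
    let ?L = "length t"
    have "1 \<le> ?L" using assms by (cases t) auto
    then have Lk: "k \<le> ?L * k" using mult_le_mono1[of 1 ?L k] by simp
    then have Lk2: "j + ?L * k - k + k = j + ?L * k" by linarith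
    have "rotate (j + ?L * k - k) (rotate k t) = rotate (j + ?L * k) t"
      using Lk2 by (simp only: rotate_rotate)
    also have "\<dots> = rotate j t"
      by (metis mod_mult_self2 rotate_conv_mod)
    finally show "r \<in> range (\<lambda>j. rotate j (rotate k t))" using r by (metis rangeI)
  qed
  then show ?thesis using cyc_range[OF ne] cyc_range[OF assms] by simp
qed

lemma card_Av:
  assumes n: "1 \<le> n"
  shows "card (Av_1423 n) = card (R n)"
proof -
  have ne: "t \<noteq> []" if "t \<in> perms n" for t
    using that n unfolding perms_def by auto
  have "bij_betw cyc (R n) (Av_1423 n)"
    unfolding bij_betw_def
  proof (intro conjI)
    show "inj_on cyc (R n)"
    proof (rule inj_onI)
      fix t t' assume h: "t \<in> R n" "t' \<in> R n" "cyc t = cyc t'"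
      have tt: "t \<in> perms n" "t' \<in> perms n" "hd t = 1" "hd t' = 1" using h unfolding R_def by auto
      have d: "distinct t" using tt unfolding perms_def by simp
      have "t' \<in> cyc t'" unfolding cyc_def using ne[OF tt(2)]
        by (metis (mono_tags, lifting) length_greater_0_conv mem_Collect_eq rotate0 id_apply)
      then obtain k where k: "k < length t" "t' = rotate k t" using h(3) unfolding cyc_def by auto
      have "t ! k = 1" using hd_rotate_conv_nth[OF ne[OF tt(1)], of k] k tt by simp
      moreover have "t ! 0 = 1" using tt ne[OF tt(1)] by (simp add: hd_conv_nth)
      ultimately have "k = 0" using d k nth_eq_iff_index_eq by fastforce
      then show "t = t'" using k by simp
    qed
  next
    show "cyc ` R n = Av_1423 n"
    proof (intro set_eqI iffI)
      fix C assume "C \<in> cyc ` R n"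
      then obtain t where t: "t \<in> R n" "C = cyc t" by blast
      then have "t \<in> perms n" "Avoid t" unfolding R_def by auto
      then show "C \<in> Av_1423 n" unfolding Av_1423_def cyc_perms_def
        using t contains_iff[of t] ne perms_def by auto
    next
      fix C assume "C \<in> Av_1423 n"
      then obtain t where t: "t \<in> perms n" "C = cyc t" "\<not> contains_1423 C"
        unfolding Av_1423_def cyc_perms_def by blast
      have d: "distinct t" "set t = {1..n}" using t unfolding perms_def by auto
      then have "1 \<in> set t" using n by simp
      then obtain k where k: "k < length t" "t ! k = 1" by (metis in_set_conv_nth)
      define t' where "t' = rotate k t"
      have d': "distinct t'" "set t' = {1..n}" using d unfolding t'_def by auto
      have h': "hd t' = 1" unfolding t'_def using hd_rotate_conv_nth[OF ne[OF t(1)], of k] k by simp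
      have c: "cyc t' = C" unfolding t'_def using cyc_rotate[OF ne[OF t(1)]] t by simp
      have "t' \<noteq> []" using d' n by auto
      then have "Avoid t'" using contains_iff[OF d'(1)] c t by simp
      then have "t' \<in> R n" unfolding R_def perms_def using d' h' by simp
      then show "C \<in> cyc ` R n" using c by blast
    qed
  qed
  from bij_betw_same_card[OF this] show ?thesis by simp
qed

theorem theorem5p9:
  fixes n :: nat
  assumes "n \<ge> 1"
  shows "real (card (Av_1423 n)) = catalan (n - 1)"
proof -
  obtain m where m: "n = Suc m" using assms by (cases n) auto
  have "real (card (Av_1423 n)) = real (card (R (Suc m)))" using card_Av assms m by simp
  also have "\<dots> = g m 1" by (rule card_R)
  also have "\<dots> = catalan m" by (rule g_catalan)
  finally show ?thesis using m by simp
qed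

end
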